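(* Fix $0<s_{\min}<s_{\max}$ and $\epsilon>0$ small, and let $\alpha=R/(R+d)$. There is $T_*>0$ such that for every $\tilde T\ge T_*$ and every pair of points $r,r'$ on the left arc $\partial\Gamma_L$ of $\partial\Gamma$ (or both on the right arc $\partial\Gamma_R$), there exists a path of a single particle from $r$ to $r'$ consisting of free flights between successive collisions with $\partial\Gamma$ (possibly with specular reflections off $L_u\cup L_d$), with all outgoing speeds $s$ and angles $\varphi$ at $\partial\Gamma$ satisfying $s_{\min}\le s\le s_{\max}$ and $\alpha+\epsilon\le|\sin\varphi|\le1-\epsilon$, which takes precisely time $\tilde T$ to complete. Moreover, these paths can be chosen so that the number of collisions is bounded by a monotone function of $\tilde T$.
   Context: $\Gamma$ is a closed disk of radius $R+d$ with a concentric disk $D$ of radius $R$; vertical segments $L_u,L_d$ above and below $D$ split $\Gamma\setminus D$ into a left and a right half, and a particle is confined to one half, moving in straight lines with constant speed and reflecting specularly off $L_u\cup L_d$. $\varphi$ is the angle of the outgoing velocity with the normal to $\partial\Gamma$ at the emission point; a chord leaving $\partial\Gamma$ with $|\sin\varphi|>\alpha$ does not meet $D$. *)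

theory Defs
  imports "HOL-Analysis.Analysis"
begin

text \<open>Gamma is the closed disk of radius
  R+d about 0, D the disk of radius R about 0, L_u and L_d are the parts of the imaginary
  axis with R <= |Im z| <= R+d. The boolean L selects the half: True = left half
  (Re z <= 0), False = right half (Re z >= 0).\<close>

definition on_side :: "bool \<Rightarrow> complex \<Rightarrow> bool" where
  "on_side L z = (if L then Re z \<le> 0 else 0 \<le> Re z)"

definition arc :: "real \<Rightarrow> bool \<Rightarrow> complex set" where
  "arc \<rho> L = {z. cmod z = \<rho> \<and> on_side L z}"

text \<open>Folding by the mirror in the vertical line Re z = 0: the specular reflections off
  L_u and L_d are modelled by unfolding; the true position is fold_half of the unfolded one.\<close>
definition fold_half :: "bool \<Rightarrow> complex \<Rightarrow> complex" where
  "fold_half L z = (if on_side L z then z else - cnj z)"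

text \<open>Sine of the angle between outgoing velocity v at emission point p on the outer
  circle and the inward normal -p/|p| (signed; only its absolute value is used).\<close>
definition sin_phi :: "complex \<Rightarrow> complex \<Rightarrow> real" where
  "sin_phi p v = Im (cnj (- p) * v) / (cmod p * cmod v)"

text \<open>The unfolded trajectory is p + tau v, the actual one fold_half L (p + tau v); it stays
  off the disk D, so every crossing of the vertical line is a specular reflection off
  L_u or L_d.\<close>
definition free_flight ::
  "real \<Rightarrow> real \<Rightarrow> bool \<Rightarrow> complex \<Rightarrow> complex \<Rightarrow> real \<Rightarrow> complex \<Rightarrow> bool" where
  "free_flight R d L p v t p' \<longleftrightarrow>
     p \<in> arc (R + d) L \<and> 0 < Re (cnj v * (- p)) \<and> 0 < t \<and>
     cmod (p + of_real t * v) = R + d \<and>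
     (\<forall>\<tau>\<in>{0<..<t}. cmod (p + of_real \<tau> * v) < R + d) \<and>
     (\<forall>\<tau>\<in>{0..t}. R < cmod (p + of_real \<tau> * v)) \<and>
     p' = fold_half L (p + of_real t * v)"

end

theory Submission imports Defs begin

lemma sin_lip: "\<bar>sin (x::real) - sin y\<bar> \<le> \<bar>x - y\<bar>"
proof -
  have h: "\<bar>sin ((x - y) / 2)\<bar> \<le> \<bar>x - y\<bar> / 2" using abs_sin_x_le_abs_x[of "(x - y)/2"] by simp
  have "\<bar>sin ((x - y) / 2)\<bar> * \<bar>cos ((x + y) / 2)\<bar> \<le> \<bar>x - y\<bar> / 2 * 1"
    by (rule mult_mono) (use h in auto)
  then show ?thesis by (simp add: sin_diff_sin abs_mult)
qed

lemma cos_lip: "\<bar>cos (x::real) - cos y\<bar> \<le> \<bar>x - y\<bar>"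
proof -
  have h: "\<bar>sin ((y - x) / 2)\<bar> \<le> \<bar>x - y\<bar> / 2" using abs_sin_x_le_abs_x[of "(y - x)/2"] by (simp add: abs_minus_commute)
  have "\<bar>sin ((x + y) / 2)\<bar> * \<bar>sin ((y - x) / 2)\<bar> \<le> 1 * (\<bar>x - y\<bar> / 2)"
    by (rule mult_mono) (use h in auto)
  then show ?thesis by (simp add: cos_diff_cos abs_mult)
qed

lemma fold_cnj: "fold_half L (- cnj x) = fold_half L x"
  by (cases L; auto simp: fold_half_def on_side_def complex_eq_iff)

lemma fold_norm: "cmod (fold_half L x) = cmod x"
  by (auto simp: fold_half_def)

lemma fold_side: "on_side L (fold_half L x)"
  by (cases L; auto simp: fold_half_def on_side_def)

lemma fold_id: "on_side L x \<Longrightarrow> fold_half L x = x"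
  by (auto simp: fold_half_def)

lemma chord:
  fixes R d s b y :: real and p :: complex
  assumes R: "0 < R" and d: "0 < d" and p: "p \<in> arc (R + d) L"
    and b: "0 < b" and by1: "b^2 + y^2 = 1" and yR: "R < (R + d) * \<bar>y\<bar>" and s: "0 < s"
  defines "c \<equiv> Complex (- b) y"
  shows "free_flight R d L p (of_real (s / (R + d)) * p * c) (2 * (R + d) * b / s)
           (fold_half L (p * Complex (1 - 2 * b^2) (2 * b * y)))"
    and "cmod (of_real (s / (R + d)) * p * c) = s"
    and "sin_phi p (of_real (s / (R + d)) * p * c) = - y"
proof -
  define \<rho> where "\<rho> = R + d"
  have rho: "0 < \<rho>" using R d by (simp add: \<rho>_def)
  have pn: "cmod p = \<rho>" using p by (simp add: arc_def \<rho>_def)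
  have cn: "cmod c = 1" using by1 by (simp add: c_def cmod_def)
  have cp: "cnj p * p = of_real (\<rho>^2)"
    by (metis complex_norm_square mult.commute pn)
  have key: "\<And>\<tau>. p + of_real \<tau> * (of_real (s / \<rho>) * p * c) = p * Complex (1 - (\<tau> * s / \<rho>) * b) ((\<tau> * s / \<rho>) * y)"
    using rho by (simp add: c_def complex_eq_iff field_simps)
  have nrm: "\<And>x. cmod (Complex (1 - x * b) (x * y)) = sqrt (1 - 2 * x * b + x^2)"
  proof -
    fix x
    have "(1 - x * b)^2 + (x*y)^2 = 1 - 2 * x * b + x^2 * (b^2 + y^2)"
      by (simp add: power2_eq_square algebra_simps)
    then show "cmod (Complex (1 - x * b) (x * y)) = sqrt (1 - 2 * x * b + x^2)"
      using by1 by (simp add: cmod_def)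
  qed
  have vn: "cmod (of_real (s / \<rho>) * p * c) = s"
    using s rho by (simp add: norm_mult norm_divide cn pn)
  then show "cmod (of_real (s / (R + d)) * p * c) = s" by (simp add: \<rho>_def)
  show "sin_phi p (of_real (s / (R + d)) * p * c) = - y"
  proof -
    have "cnj (- p) * (of_real (s / \<rho>) * p * c) = - (of_real (s / \<rho>) * (cnj p * p) * c)"
      by (simp add: algebra_simps)
    also have "\<dots> = - of_real (s * \<rho>) * c"
      using cp rho by (simp add: power2_eq_square field_simps)
    finally have "cnj (- p) * (of_real (s / \<rho>) * p * c) = - of_real (s * \<rho>) * c" .
    then show ?thesis unfolding \<rho>_def[symmetric] sin_phi_def vn pn using s rho
      by (simp add: c_def)
  qed
  show "free_flight R d L p (of_real (s / (R + d)) * p * c) (2 * (R + d) * b / s)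
           (fold_half L (p * Complex (1 - 2 * b^2) (2 * b * y)))"
    unfolding free_flight_def \<rho>_def[symmetric]
  proof (intro conjI ballI)
    show "p \<in> arc \<rho> L" using p by (simp add: \<rho>_def)
    have "cnj (of_real (s / \<rho>) * p * c) * - p = - (of_real (s / \<rho>) * (cnj p * p) * cnj c)"
      by (simp add: algebra_simps)
    also have "\<dots> = - of_real (s * \<rho>) * cnj c"
      using cp rho by (simp add: power2_eq_square field_simps)
    finally have "cnj (of_real (s / \<rho>) * p * c) * - p = - of_real (s * \<rho>) * cnj c" .
    then show "0 < Re (cnj (of_real (s / \<rho>) * p * c) * - p)"
      using s rho b by (simp add: c_def)
    show "0 < 2 * \<rho> * b / s" using rho b s by simp
    have e: "2 * \<rho> * b / s * s / \<rho> = 2 * b" using rho s by simp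
    show "cmod (p + of_real (2 * \<rho> * b / s) * (of_real (s / \<rho>) * p * c)) = \<rho>"
      unfolding key e nrm norm_mult pn by (simp add: power2_eq_square)
    show "fold_half L (p * Complex (1 - 2 * b\<^sup>2) (2 * b * y)) = fold_half L (p + of_real (2 * \<rho> * b / s) * (of_real (s / \<rho>) * p * c))"
      unfolding key e by (simp add: power2_eq_square mult.assoc)
  next
    fix \<tau> assume "\<tau> \<in> {0<..<2 * \<rho> * b / s}"
    then have x: "0 < \<tau> * s / \<rho>" "\<tau> * s / \<rho> < 2 * b" using rho s by (auto simp: field_simps)
    define x where "x = \<tau> * s / \<rho>"
    have "1 - 2 * x * b + x^2 < 1" using x unfolding x_def[symmetric]
      by (simp add: power2_eq_square)
    then show "cmod (p + of_real \<tau> * (of_real (s / \<rho>) * p * c)) < \<rho>"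
      unfolding key nrm norm_mult pn x_def[symmetric] using rho by simp
  next
    fix \<tau> assume "\<tau> \<in> {0..2 * \<rho> * b / s}"
    define x where "x = \<tau> * s / \<rho>"
    have "y^2 \<le> 1 - 2 * x * b + x^2"
      using by1 by (smt (verit) power2_diff zero_le_power2)
    then have "\<bar>y\<bar> \<le> sqrt (1 - 2 * x * b + x^2)"
      by (intro real_le_rsqrt) simp
    then show "R < cmod (p + of_real \<tau> * (of_real (s / \<rho>) * p * c))"
      unfolding key nrm norm_mult pn x_def[symmetric] using rho yR \<rho>_def
      by (smt (verit) mult_left_mono)
  qed
qed
lemma walk:
  fixes R d s g :: real and r r' :: complex and n :: nat
  assumes R: "0 < R" and d: "0 < d" and r: "r \<in> arc (R + d) L"
    and b: "0 < sin g" and a: "R < (R + d) * \<bar>cos g\<bar>" and s: "0 < s"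
    and rr: "r' = r * cis g ^ (2 * n)" and r': "r' \<in> arc (R + d) L"
  shows "\<exists>p v t. p 0 = r \<and> p n = r' \<and> (\<Sum>k<n. t k) = real n * (2 * (R + d) * sin g / s) \<and>
           (\<forall>k<n. free_flight R d L (p k) (v k) (t k) (p (Suc k)) \<and>
              cmod (v k) = s \<and> \<bar>sin_phi (p k) (v k)\<bar> = \<bar>cos g\<bar>)"
proof -
  define z where "z = cis g"
  define U where "U k = r * z ^ (2 * k)" for k
  define p where "p k = fold_half L (U k)" for k
  define y where "y k = (if on_side L (U k) then cos g else - cos g)" for k
  define v where "v k = of_real (s / (R + d)) * p k * Complex (- sin g) (y k)" for k
  define t where "t k = 2 * (R + d) * sin g / s" for k :: nat
  have rs: "on_side L r" and rn: "cmod r = R + d" using r by (auto simp: arc_def)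
  have r's: "on_side L r'" using r' by (simp add: arc_def)
  have "p 0 = r" using rs by (simp add: p_def U_def fold_id)
  moreover have "p n = r'" using r's rr by (simp add: p_def U_def z_def fold_id)
  moreover have "(\<Sum>k<n. t k) = real n * (2 * (R + d) * sin g / s)" by (simp add: t_def)
  moreover have "free_flight R d L (p k) (v k) (t k) (p (Suc k)) \<and>
              cmod (v k) = s \<and> \<bar>sin_phi (p k) (v k)\<bar> = \<bar>cos g\<bar>" for k
  proof -
    have pk: "p k \<in> arc (R + d) L"
      by (simp add: arc_def p_def fold_norm fold_side U_def norm_mult norm_power z_def rn)
    have by1: "(sin g)^2 + (y k)^2 = 1" by (simp add: y_def)
    have yR: "R < (R + d) * \<bar>y k\<bar>" using a by (simp add: y_def)
    note ch = chord[OF R d pk b by1 yR s]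
    have zz: "z ^ (2 * Suc k) = z ^ (2 * k) * z^2"
      by (simp add: power_add[symmetric])
    have Us: "U (Suc k) = U k * z^2" unfolding U_def zz by (simp add: mult.assoc)
    have e: "fold_half L (p k * Complex (1 - 2 * (sin g)^2) (2 * sin g * y k)) = p (Suc k)"
    proof (cases "on_side L (U k)")
      case True
      have "Complex (1 - 2 * (sin g)^2) (2 * sin g * y k) = z^2"
        using True by (simp add: y_def z_def complex_eq_iff power2_eq_square cos_squared_eq algebra_simps)
      then show ?thesis using True
        by (simp add: p_def fold_id Us)
    next
      case False
      have "Complex (1 - 2 * (sin g)^2) (2 * sin g * y k) = cnj (z^2)"
        using False by (simp add: y_def z_def complex_eq_iff power2_eq_square cos_squared_eq algebra_simps)
      then have "p k * Complex (1 - 2 * (sin g)^2) (2 * sin g * y k) = - cnj (U (Suc k))"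
        using False by (simp add: p_def fold_half_def Us)
      then show ?thesis by (simp add: fold_cnj p_def)
    qed
    show ?thesis using ch e by (simp add: v_def t_def y_def)
  qed
  ultimately show ?thesis by blast
qed
theorem lemma3:
  fixes R d s_min s_max :: real
  assumes "0 < R" and "0 < d" and "0 < s_min" and "s_min < s_max"
  shows "\<exists>\<epsilon>0>0. \<forall>\<epsilon>. 0 < \<epsilon> \<and> \<epsilon> < \<epsilon>0 \<longrightarrow>
    (\<exists>T_star>0. \<exists>N :: real \<Rightarrow> nat. mono N \<and>
      (\<forall>T\<ge>T_star. \<forall>L r r'. r \<in> arc (R + d) L \<and> r' \<in> arc (R + d) L \<longrightarrow>
        (\<exists>n p v t. n \<le> N T \<and> p 0 = r \<and> p n = r' \<and> (\<Sum>k<n. t k) = T \<and>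
           (\<forall>k<n. free_flight R d L (p k) (v k) (t k) (p (Suc k)) \<and>
              s_min \<le> cmod (v k) \<and> cmod (v k) \<le> s_max \<and>
              R / (R + d) + \<epsilon> \<le> \<bar>sin_phi (p k) (v k)\<bar> \<and>
              \<bar>sin_phi (p k) (v k)\<bar> \<le> 1 - \<epsilon>))))"
proof -
  note R = assms(1) and d = assms(2)
  define \<rho> where "\<rho> = R + d"
  have rho: "0 < \<rho>" using R d by (simp add: \<rho>_def)
  define \<alpha> where "\<alpha> = R / \<rho>"
  have al: "0 < \<alpha>" "\<alpha> < 1" using R d by (auto simp: \<alpha>_def \<rho>_def)
  define \<eta> where "\<eta> = (1 - \<alpha>) / 4"
  have eta: "0 < \<eta>" using al by (simp add: \<eta>_def)
  define gs where "gs = arccos ((1 + \<alpha>) / 2)"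
  have cgs: "cos gs = (1 + \<alpha>) / 2" using al by (simp add: gs_def)
  have gsb: "0 < gs" "gs < pi" using al arccos_lt_bounded[of "(1 + \<alpha>) / 2"] by (auto simp: gs_def)
  have sgs: "0 < sin gs" using gsb by (simp add: sin_gt_zero)
  define \<tau>0 where "\<tau>0 = min \<eta> (min (gs / 2) ((pi - gs) / 2))"
  have t0: "0 < \<tau>0" using eta gsb by (simp add: \<tau>0_def)
  define ls where "ls = 2 * \<rho> * sin gs"
  have ls: "0 < ls" using rho sgs by (simp add: ls_def)
  define ss where "ss = (s_min + s_max) / 2"
  define h where "h = (s_max - s_min) / 2"
  have ss: "0 < ss" "0 < h" using assms by (auto simp: ss_def h_def)
  define N :: "real \<Rightarrow> nat" where "N T = nat \<lceil>T * ss / ls\<rceil>" for T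
  define Ts where "Ts = max ((ls + \<rho> * pi) / h) (pi * ls / (2 * \<tau>0 * ss)) + 1"
  have "0 < pi * ls / (2 * \<tau>0 * ss)" using ls ss t0 by simp
  then have Ts: "0 < Ts" unfolding Ts_def by linarith
  have monoN: "mono N"
    unfolding N_def mono_def
    by (intro allI impI nat_mono ceiling_mono divide_right_mono mult_right_mono) (use ls ss in auto)
  show ?thesis
  proof (rule exI[of _ \<eta>], rule conjI[OF eta], intro allI impI)
    fix \<epsilon> :: real assume e: "0 < \<epsilon> \<and> \<epsilon> < \<eta>"
    show "\<exists>T_star>0. \<exists>N :: real \<Rightarrow> nat. mono N \<and>
      (\<forall>T\<ge>T_star. \<forall>L r r'. r \<in> arc (R + d) L \<and> r' \<in> arc (R + d) L \<longrightarrow>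
        (\<exists>n p v t. n \<le> N T \<and> p 0 = r \<and> p n = r' \<and> (\<Sum>k<n. t k) = T \<and>
           (\<forall>k<n. free_flight R d L (p k) (v k) (t k) (p (Suc k)) \<and>
              s_min \<le> cmod (v k) \<and> cmod (v k) \<le> s_max \<and>
              R / (R + d) + \<epsilon> \<le> \<bar>sin_phi (p k) (v k)\<bar> \<and>
              \<bar>sin_phi (p k) (v k)\<bar> \<le> 1 - \<epsilon>)))"
    proof (rule exI[of _ Ts], rule conjI[OF Ts], rule exI[of _ N], rule conjI[OF monoN], intro allI impI)
      fix T L r r' assume T: "Ts \<le> T" and rr: "r \<in> arc (R + d) L \<and> r' \<in> arc (R + d) L"
      have Tpos: "0 < T" using T Ts by simp
      define n where "n = N T"
      have n1: "T * ss / ls \<le> real n" "real n < T * ss / ls + 1"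
        unfolding n_def N_def using Tpos ss ls by (auto, linarith)
      have npos: "0 < real n" using n1 Tpos ss ls by (smt (verit) divide_pos_pos mult_pos_pos)
      have "pi * ls / (2 * \<tau>0 * ss) \<le> T" using T by (simp add: Ts_def)
      then have "pi / (2 * \<tau>0) \<le> T * ss / ls" using ls ss t0 by (simp add: field_simps)
      then have "pi / (2 * \<tau>0) \<le> real n" using n1 by linarith
      then have "pi \<le> 2 * \<tau>0 * real n" using t0 by (simp add: field_simps)
      then have nt0: "pi / (2 * real n) \<le> \<tau>0" using npos by (simp add: field_simps)
      have rn: "cmod r = \<rho>" "cmod r' = \<rho>" using rr by (auto simp: arc_def \<rho>_def)
      define D where "D = Arg (r' / r)"
      have cD: "cis D = r' / r"
      proof -
        have "r' / r \<noteq> 0" using rn rho by auto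
        then have "cis D = sgn (r' / r)" by (simp add: D_def cis_Arg)
        also have "\<dots> = r' / r" using rn rho by (simp add: sgn_div_norm norm_divide)
        finally show ?thesis .
      qed
      define m where "m = round ((2 * real n * gs - D) / (2 * pi))"
      define g where "g = (D + 2 * pi * of_int m) / (2 * real n)"
      have "\<bar>of_int m - (2 * real n * gs - D) / (2 * pi)\<bar> \<le> 1/2"
        unfolding m_def by (rule of_int_round_abs_le)
      moreover have "2 * pi * of_int m - (2 * real n * gs - D) = 2 * pi * (of_int m - (2 * real n * gs - D) / (2 * pi))"
        by (simp add: field_simps)
      ultimately have "\<bar>2 * pi * of_int m - (2 * real n * gs - D)\<bar> \<le> pi"
        by (simp add: abs_mult)
      moreover have "g - gs = (2 * pi * of_int m - (2 * real n * gs - D)) / (2 * real n)"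
        using npos by (simp add: g_def field_simps)
      ultimately have gg: "\<bar>g - gs\<bar> \<le> pi / (2 * real n)"
        using npos by (simp add: abs_divide divide_right_mono)
      have gt0: "\<bar>g - gs\<bar> \<le> \<tau>0" using gg nt0 by simp
      have g1: "\<bar>g - gs\<bar> \<le> gs / 2" "\<bar>g - gs\<bar> \<le> (pi - gs) / 2" using gt0 by (auto simp: \<tau>0_def)
      have "gs - g \<le> gs / 2" "g - gs \<le> (pi - gs) / 2" using g1 abs_ge_self[of "g - gs"] abs_ge_minus_self[of "g - gs"] by linarith+
      then have "0 < g" "g < pi" using gsb by simp_all
      then have sg: "0 < sin g" by (rule sin_gt_zero)
      have cg: "\<bar>cos g - (1 + \<alpha>) / 2\<bar> \<le> \<eta>"
        using cos_lip[of g gs] gt0 cgs by (simp add: \<tau>0_def)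
      define s where "s = 2 * real n * \<rho> * sin g / T"
      have spos: "0 < s" using npos rho sg Tpos by (simp add: s_def)
      have "cis g ^ (2 * n) = cis (real (2 * n) * g)" by (rule Complex.DeMoivre)
      also have "real (2 * n) * g = D + 2 * pi * of_int m" using npos by (simp add: g_def)
      finally have "cis g ^ (2 * n) = cis (D + 2 * pi * of_int m)" .
      also have "\<dots> = cis D" by (simp add: cis_mult[symmetric])
      finally have rr': "r' = r * cis g ^ (2 * n)" using cD rn rho by auto
      have "cos g - (1 + \<alpha>) / 2 \<ge> - \<eta>" using cg by linarith
      have cpos1: "\<alpha> + \<eta> \<le> cos g" using `cos g - (1 + \<alpha>) / 2 \<ge> - \<eta>` \<eta>_def by (simp add: field_simps)
      have "cos g - (1 + \<alpha>) / 2 \<le> \<eta>" using cg by linarith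
      have cpos2: "cos g \<le> 1 - \<eta>" using `cos g - (1 + \<alpha>) / 2 \<le> \<eta>` \<eta>_def by (simp add: field_simps)
      note cpos = cpos1 cpos2
      have "R = \<rho> * \<alpha>" using rho by (simp add: \<alpha>_def)
      moreover have "\<rho> * \<alpha> < \<rho> * cos g" using cpos eta rho by (intro mult_strict_left_mono) auto
      moreover have "0 < cos g" using cpos eta al by linarith
      ultimately have aR: "R < (R + d) * \<bar>cos g\<bar>" by (simp add: \<rho>_def)
      obtain p v t where pvt: "p 0 = r" "p n = r'" "(\<Sum>k<n. t k) = real n * (2 * (R + d) * sin g / s)"
        "\<forall>k<n. free_flight R d L (p k) (v k) (t k) (p (Suc k)) \<and>
              cmod (v k) = s \<and> \<bar>sin_phi (p k) (v k)\<bar> = \<bar>cos g\<bar>"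
        using walk[OF R d _ sg aR spos rr'] rr by blast
      have sumT: "real n * (2 * (R + d) * sin g / s) = T"
        using npos rho sg Tpos by (simp add: s_def \<rho>_def[symmetric] field_simps)
      have T1: "T * s = real n * (2 * \<rho> * sin g)" using Tpos by (simp add: s_def)
      have "real n * (2 * \<rho> * sin g) - real n * ls = (real n * (2 * \<rho>)) * (sin g - sin gs)"
        by (simp add: ls_def algebra_simps)
      then have "\<bar>real n * (2 * \<rho> * sin g) - real n * ls\<bar> = real n * (2 * \<rho>) * \<bar>sin g - sin gs\<bar>"
        using rho by (simp only: abs_mult)
      also have "\<dots> \<le> real n * (2 * \<rho>) * (pi / (2 * real n))"
        using sin_lip[of g gs] gg npos rho by (intro mult_left_mono) auto
      also have "\<dots> = \<rho> * pi" using npos by simp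
      finally have df: "\<bar>real n * (2 * \<rho> * sin g) - real n * ls\<bar> \<le> \<rho> * pi" .
      have nls1: "T * ss \<le> real n * ls" using n1(1) ls by (simp add: field_simps)
      have nls2: "real n * ls \<le> T * ss + ls" using n1(2) ls by (simp add: field_simps)
      have "(ls + \<rho> * pi) / h \<le> T" using T by (simp add: Ts_def)
      then have Th: "ls + \<rho> * pi \<le> T * h" using ss by (simp add: field_simps)
      have e1: "T * ss - T * h = T * s_min" "T * ss + T * h = T * s_max"
        by (simp_all add: ss_def h_def field_simps)
      have "T * s_min \<le> T * s" using T1 df nls1 Th e1 ls abs_ge_minus_self[of "real n * (2 * \<rho> * sin g) - real n * ls"]
        by linarith
      then have sb1: "s_min \<le> s" using Tpos by simp
      have "T * s \<le> T * s_max" using T1 df nls2 Th e1 abs_ge_self[of "real n * (2 * \<rho> * sin g) - real n * ls"]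
        by linarith
      then have sb2: "s \<le> s_max" using Tpos by simp
      note sb = sb1 sb2
      have cb: "R / (R + d) + \<epsilon> \<le> \<bar>cos g\<bar>" "\<bar>cos g\<bar> \<le> 1 - \<epsilon>"
        using cpos e eta al by (auto simp: \<alpha>_def \<rho>_def)
      show "\<exists>n p v t. n \<le> N T \<and> p 0 = r \<and> p n = r' \<and> (\<Sum>k<n. t k) = T \<and>
           (\<forall>k<n. free_flight R d L (p k) (v k) (t k) (p (Suc k)) \<and>
              s_min \<le> cmod (v k) \<and> cmod (v k) \<le> s_max \<and>
              R / (R + d) + \<epsilon> \<le> \<bar>sin_phi (p k) (v k)\<bar> \<and>
              \<bar>sin_phi (p k) (v k)\<bar> \<le> 1 - \<epsilon>)"
        using pvt sumT sb cb by (intro exI[of _ n] exI[of _ p] exI[of _ v] exI[of _ t]) (auto simp: n_def)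
    qed
  qed
qed
end
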